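(* For every integer $d\ge 0$, $$\frac14\sum_{\ell=0}^{\lfloor d/3\rfloor}\;\sum_{m=0}^{\lfloor (d-3\ell)/2\rfloor}(d-3\ell-2m+1)^2(m+1)^2(d-3\ell-m+2)^2=\binom{d+8}{d}.$$ *)

theory Defs
  imports Complex_Main
begin

end

theory Submission
  imports Defs
begin

definition Tm :: "real \<Rightarrow> real \<Rightarrow> real" where
  "Tm x m = (x - 2 * m + 1)^2 * (m + 1)^2 * (x - m + 2)^2"

definition Pp :: "real \<Rightarrow> real \<Rightarrow> real" where
  "Pp x M = ((840) + (-484) * M + (2170) * M^3 + (-966) * M^5 + (120) * M^7 + (2520) * x + (-546) * x * M + (-3255) * x * M^2 + (2310) * x * M^3 + (2415) * x * M^4 + (-504) * x * M^5 + (-420) * x * M^6 + (2730) * x^2 + (1379) * x^2 * M + (-3465) * x^2 * M^2 + (-1400) * x^2 * M^3 + (1260) * x^2 * M^4 + (546) * x^2 * M^5 + (1260) * x^3 + (1680) * x^3 * M + (-315) * x^3 * M^2 + (-1050) * x^3 * M^3 + (-315) * x^3 * M^4 + (210) * x^4 + (455) * x^4 * M + (315) * x^4 * M^2 + (70) * x^4 * M^3) / 210"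

definition Bp :: "real \<Rightarrow> real" where
  "Bp x = (x+1)*(x+2)*(x+3)*(x+4)*(x+5)*(x+6)*(x+7)*(x+8) / 40320"

lemma sumP: "(\<Sum>m=0..M. Tm x (real m)) = Pp x (real M)"
proof (induction M)
  case 0
  show ?case unfolding Tm_def Pp_def by (simp add: power2_eq_square power3_eq_cube power4_eq_xxxx algebra_simps)
next
  case (Suc M)
  have "Pp x (1 + real M) = Pp x (real M) + Tm x (1 + real M)"
    unfolding Pp_def Tm_def by algebra
  then show ?case using Suc by simp
qed

lemma binom: "real ((d+8) choose d) = Bp (real d)"
proof (induction d)
  case 0
  then show ?case by (simp add: Bp_def)
next
  case (Suc d)
  have "real (Suc d) * real ((Suc d + 8) choose Suc d) = real (Suc d + 8) * real ((d+8) choose d)"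
    using Suc_times_binomial[of d "d+8"] by (metis add_Suc of_nat_mult)
  hence "real ((Suc d + 8) choose Suc d) = real (Suc d + 8) * Bp (real d) / real (Suc d)"
    using Suc by (simp add: field_simps)
  also have "\<dots> = Bp (real (Suc d))" unfolding Bp_def by (simp add: field_simps)
  finally show ?case .
qed

definition H :: "nat \<Rightarrow> real" where "H n = Pp (real n) (real (n div 2))"

lemma Hstep: "H (e+3) = 4*(Bp (real e + 3) - Bp (real e))"
proof (cases "even e")
  case True
  then obtain j where e: "e = 2*j" by blast
  have "(e+3) div 2 = j+1" using e by presburger
  hence "H (e+3) = Pp (2*real j + 3) (real j + 1)" using e by (simp add: H_def add.commute)
  moreover have "Pp (2*real j + 3) (real j + 1) = 4*(Bp (2*real j + 3) - Bp (2*real j))"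
    unfolding Pp_def Bp_def by algebra
  ultimately show ?thesis using e by simp
next
  case False
  then obtain j where e: "e = 2*j+1" using oddE by blast
  have "(e+3) div 2 = j+2" using e by presburger
  hence "H (e+3) = Pp (2*real j + 4) (real j + 2)" using e by (simp add: H_def add.commute)
  moreover have "Pp (2*real j + 4) (real j + 2) = 4*(Bp (2*real j + 4) - Bp (2*real j + 1))"
    unfolding Pp_def Bp_def by algebra
  ultimately show ?thesis using e by (simp add: add.commute)
qed

lemma mainH: "(\<Sum>l=0..d div 3. H (d - 3*l)) = 4 * Bp (real d)"
proof (induction d rule: less_induct)
  case (less d)
  show ?case
  proof (cases "d < 3")
    case True
    then have "d = 0 \<or> d = 1 \<or> d = 2" by auto
    then show ?thesis by (auto simp: H_def Pp_def Bp_def)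
  next
    case False
    then obtain e where e: "d = e + 3" by (metis add.commute le_Suc_ex not_less)
    have dv: "d div 3 = Suc (e div 3)" using e by simp
    have "(\<Sum>l=0..d div 3. H (d - 3*l)) = H d + (\<Sum>l=0..e div 3. H (d - 3*Suc l))"
      unfolding dv by (subst sum.atLeast0_atMost_Suc_shift) simp
    also have "(\<Sum>l=0..e div 3. H (d - 3*Suc l)) = (\<Sum>l=0..e div 3. H (e - 3*l))"
      using e by simp
    also have "\<dots> = 4 * Bp (real e)" using less[of e] e by simp
    finally show ?thesis using Hstep[of e] e by simp
  qed
qed

theorem lemma5p7:
  fixes d :: nat
  shows "(1/4::real) * (\<Sum>l=0..d div 3. \<Sum>m=0..(d - 3*l) div 2.
            (real d - 3 * real l - 2 * real m + 1)^2 * (real m + 1)^2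
            * (real d - 3 * real l - real m + 2)^2)
         = real ((d + 8) choose d)"
proof -
  have "(\<Sum>l=0..d div 3. \<Sum>m=0..(d - 3*l) div 2.
            (real d - 3 * real l - 2 * real m + 1)^2 * (real m + 1)^2
            * (real d - 3 * real l - real m + 2)^2) = (\<Sum>l=0..d div 3. H (d - 3*l))"
  proof (rule sum.cong)
    fix l assume "l \<in> {0..d div 3}"
    then have le: "3*l \<le> d" by auto
    then have r: "real (d - 3*l) = real d - 3 * real l" by (simp add: of_nat_diff)
    show "(\<Sum>m=0..(d - 3*l) div 2.
            (real d - 3 * real l - 2 * real m + 1)^2 * (real m + 1)^2
            * (real d - 3 * real l - real m + 2)^2) = H (d - 3*l)"
      unfolding H_def sumP[symmetric] Tm_def r ..
  qed simp
  then show ?thesis using mainH[of d] binom[of d] by simp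
qed

end
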